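(* Let $(E,C)$ be a separated graph with $E^0$ and $E^1$ countable, let $S\subseteq C_{fin}$ and let $K$ be a field. In the algebra $L_K(E,C,S)$ the following hold: 1. $e\neq 0$ for each $e\in E^1$; 2. $v\neq 0$ for each $v\in E^0$; 3. $e^*f\neq 0$ for each $e\in X$, $f\in Y$, where $X,Y\in C_v$ with $X\neq Y$; 4. for each finite set $X\in C_v\setminus S$, $\sum_{e\in X}ee^*v=\sum_{e\in X}ee^*=v\sum_{e\in X}ee^*$, but $\sum_{e\in X}ee^*\neq v$; 5. for finite sets $X,Y\in C\setminus S$ with $X\neq Y$, $\sum_{e\in X}ee^*\neq\sum_{f\in Y}ff^*$.
   Context: A separated graph is a pair $(E,C)$ where $E=(E^0,E^1,r,s)$ is a directed graph and $C=\bigcup_{v\in E^0}C_v$, where for each non-sink $v$, $C_v$ is a partition of $s^{-1}(v)$ into pairwise disjoint nonempty sets; $C_{fin}$ is the set of finite $Y\in C$. For $S\subseteq C_{fin}$ and a field $K$, the Cohn-Leavitt algebra $L_K(E,C,S)$ is the universal $K$-algebra generated by pairwise orthogonal idempotents $\{v:v\in E^0\}$ and elements $\{e,e^*:e\in E^1\}$ subject to: $s(e)e=er(e)=e$; $r(e)e^*=e^*s(e)=e^*$; $e^*f=\delta_{e,f}r(e)$ for $e,f\in Y$, $Y\in C$; $v=\sum_{e\in X}ee^*$ for every $X\in S\cap C_v$, $v$ non-sink. *)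

theory Defs
  imports Main "HOL-Library.Countable_Set"
begin

definition separated_graph ::
  "'v set \<Rightarrow> 'e set \<Rightarrow> ('e \<Rightarrow> 'v) \<Rightarrow> ('e \<Rightarrow> 'v) \<Rightarrow> 'e set set \<Rightarrow> bool" where
  "separated_graph V Ed r s C \<longleftrightarrow>
     (\<forall>e\<in>Ed. s e \<in> V \<and> r e \<in> V) \<and>
     (\<forall>X\<in>C. X \<noteq> {} \<and> X \<subseteq> Ed \<and> (\<forall>e\<in>X. \<forall>f\<in>X. s e = s f)) \<and>
     (\<forall>e\<in>Ed. \<exists>!X. X \<in> C \<and> e \<in> X)"

definition Cv :: "('e \<Rightarrow> 'v) \<Rightarrow> 'e set set \<Rightarrow> 'v \<Rightarrow> 'e set set" where
  "Cv s C v = {X \<in> C. \<forall>e\<in>X. s e = v}"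

definition Cfin :: "'e set set \<Rightarrow> 'e set set" where
  "Cfin C = {X \<in> C. finite X}"

datatype ('v,'e) gen = GV 'v | GE 'e | GS 'e  (* vertex v, edge e, ghost edge e* *)

text \<open>Elements of the free K-algebra: finitely supported functions from words to K.\<close>
type_synonym ('v,'e,'k) fpoly = "('v,'e) gen list \<Rightarrow> 'k"

definition mon :: "('v,'e) gen list \<Rightarrow> ('v,'e,'k::field) fpoly" where
  "mon w = (\<lambda>u. if u = w then 1 else 0)"

definition padd :: "('v,'e,'k::field) fpoly \<Rightarrow> ('v,'e,'k) fpoly \<Rightarrow> ('v,'e,'k) fpoly" where
  "padd p q = (\<lambda>u. p u + q u)"

definition psub :: "('v,'e,'k::field) fpoly \<Rightarrow> ('v,'e,'k) fpoly \<Rightarrow> ('v,'e,'k) fpoly" where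
  "psub p q = (\<lambda>u. p u - q u)"

definition psmult :: "'k \<Rightarrow> ('v,'e,'k::field) fpoly \<Rightarrow> ('v,'e,'k) fpoly" where
  "psmult c p = (\<lambda>u. c * p u)"

definition pzero :: "('v,'e,'k::field) fpoly" where
  "pzero = (\<lambda>u. 0)"

definition pmul :: "('v,'e,'k::field) fpoly \<Rightarrow> ('v,'e,'k) fpoly \<Rightarrow> ('v,'e,'k) fpoly" where
  "pmul p q = (\<lambda>u. \<Sum>i\<le>length u. p (take i u) * q (drop i u))"

definition psum :: "'a set \<Rightarrow> ('a \<Rightarrow> ('v,'e,'k::field) fpoly) \<Rightarrow> ('v,'e,'k) fpoly" where
  "psum A f = (\<lambda>u. \<Sum>a\<in>A. f a u)"

definition valid_gen :: "'v set \<Rightarrow> 'e set \<Rightarrow> ('v,'e) gen \<Rightarrow> bool" where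
  "valid_gen V Ed g = (case g of GV v \<Rightarrow> v \<in> V | GE e \<Rightarrow> e \<in> Ed | GS e \<Rightarrow> e \<in> Ed)"

inductive_set gen_ideal :: "'v set \<Rightarrow> 'e set \<Rightarrow> ('v,'e,'k::field) fpoly set \<Rightarrow> ('v,'e,'k) fpoly set"
  for V Ed R where
  base: "p \<in> R \<Longrightarrow> p \<in> gen_ideal V Ed R"
| zero: "pzero \<in> gen_ideal V Ed R"
| add: "p \<in> gen_ideal V Ed R \<Longrightarrow> q \<in> gen_ideal V Ed R \<Longrightarrow> padd p q \<in> gen_ideal V Ed R"
| smult: "p \<in> gen_ideal V Ed R \<Longrightarrow> psmult c p \<in> gen_ideal V Ed R"
| mult: "p \<in> gen_ideal V Ed R \<Longrightarrow> list_all (valid_gen V Ed) a \<Longrightarrow> list_all (valid_gen V Ed) b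
         \<Longrightarrow> pmul (mon a) (pmul p (mon b)) \<in> gen_ideal V Ed R"

text \<open>Each relation lhs = rhs is encoded as lhs - rhs.\<close>
definition CL_relations ::
  "'v set \<Rightarrow> 'e set \<Rightarrow> ('e \<Rightarrow> 'v) \<Rightarrow> ('e \<Rightarrow> 'v) \<Rightarrow> 'e set set \<Rightarrow> 'e set set
   \<Rightarrow> ('v,'e,'k::field) fpoly set" where
  "CL_relations V Ed r s C S =
     {psub (mon [GV v, GV w]) (if v = w then mon [GV v] else pzero) | v w. v \<in> V \<and> w \<in> V}
   \<union> {psub (mon [GV (s e), GE e]) (mon [GE e]) | e. e \<in> Ed}
   \<union> {psub (mon [GE e, GV (r e)]) (mon [GE e]) | e. e \<in> Ed}
   \<union> {psub (mon [GV (r e), GS e]) (mon [GS e]) | e. e \<in> Ed}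
   \<union> {psub (mon [GS e, GV (s e)]) (mon [GS e]) | e. e \<in> Ed}
   \<union> {psub (mon [GS e, GE f]) (if e = f then mon [GV (r e)] else pzero) | e f Y.
        Y \<in> C \<and> e \<in> Y \<and> f \<in> Y}
   \<union> {psub (mon [GV v]) (psum X (\<lambda>e. mon [GE e, GS e])) | v X.
        v \<in> V \<and> X \<in> S \<and> X \<in> Cv s C v}"

text \<open>The ideal I with L_K(E,C,S) = (free algebra)/I. An element p of the free algebra
is zero in L_K(E,C,S) iff p is in I; p = q in L_K(E,C,S) iff p - q is in I.\<close>
definition CL_ideal ::
  "'v set \<Rightarrow> 'e set \<Rightarrow> ('e \<Rightarrow> 'v) \<Rightarrow> ('e \<Rightarrow> 'v) \<Rightarrow> 'e set set \<Rightarrow> 'e set set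
   \<Rightarrow> ('v,'e,'k::field) fpoly set" where
  "CL_ideal V Ed r s C S = gen_ideal V Ed (CL_relations V Ed r s C S)"

definition CL_eq ::
  "'v set \<Rightarrow> 'e set \<Rightarrow> ('e \<Rightarrow> 'v) \<Rightarrow> ('e \<Rightarrow> 'v) \<Rightarrow> 'e set set \<Rightarrow> 'e set set
   \<Rightarrow> ('v,'e,'k::field) fpoly \<Rightarrow> ('v,'e,'k) fpoly \<Rightarrow> bool" where
  "CL_eq V Ed r s C S p q \<longleftrightarrow> psub p q \<in> CL_ideal V Ed r s C S"

definition eestar :: "'e set \<Rightarrow> ('v,'e,'k::field) fpoly" where
  "eestar X = psum X (\<lambda>e. mon [GE e, GS e])"

end

theory Submission
  imports Defs
begin
definition supp :: "('v,'e,'k::field) fpoly \<Rightarrow> ('v,'e) gen list set" where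
  "supp p = {w. p w \<noteq> 0}"

lemma supp_mon[simp]: "supp (mon w :: ('v,'e,'k::field) fpoly) = {w}"
  by (auto simp: supp_def mon_def)
lemma supp_pzero[simp]: "supp (pzero :: ('v,'e,'k::field) fpoly) = {}"
  by (simp add: supp_def pzero_def)
lemma supp_padd: "supp (padd p q) \<subseteq> supp p \<union> supp q" by (auto simp: supp_def padd_def)
lemma supp_psub: "supp (psub p q) \<subseteq> supp p \<union> supp q" by (auto simp: supp_def psub_def)
lemma supp_psmult: "supp (psmult c p) \<subseteq> supp p" by (auto simp: supp_def psmult_def)
lemma supp_psum: "supp (psum X f) \<subseteq> (\<Union>x\<in>X. supp (f x))"
proof
  fix u assume "u \<in> supp (psum X f)"
  then have "(\<Sum>x\<in>X. f x u) \<noteq> 0" by (simp add: supp_def psum_def)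
  then obtain x where "x \<in> X" "f x u \<noteq> 0" by (metis (mono_tags, lifting) sum.neutral)
  then show "u \<in> (\<Union>x\<in>X. supp (f x))" by (auto simp: supp_def)
qed

lemma pmul_mon_left:
  "pmul (mon a) q u = (if length a \<le> length u \<and> take (length a) u = a then q (drop (length a) u) else 0)"
proof -
  have "pmul (mon a) q u = (\<Sum>i\<in>{..length u}. if i = length a then (if take (length a) u = a then q (drop (length a) u) else 0) else 0)"
    unfolding pmul_def by (rule sum.cong) (auto simp: mon_def)
  also have "\<dots> = (if length a \<le> length u \<and> take (length a) u = a then q (drop (length a) u) else 0)"
    by (simp add: sum.delta)
  finally show ?thesis .
qed

lemma pmul_mon_right:
  "pmul q (mon b) u = (if length b \<le> length u \<and> drop (length u - length b) u = b then q (take (length u - length b) u) else 0)"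
proof -
  have "pmul q (mon b) u = (\<Sum>i\<in>{..length u}. if i = length u - length b then (if length b \<le> length u \<and> drop (length u - length b) u = b then q (take (length u - length b) u) else 0) else 0)"
    unfolding pmul_def by (rule sum.cong) (auto simp: mon_def)
  also have "\<dots> = (if length b \<le> length u \<and> drop (length u - length b) u = b then q (take (length u - length b) u) else 0)"
    by (simp add: sum.delta)
  finally show ?thesis .
qed

lemma pmul_mon_mon: "pmul (mon a) (mon b :: ('v,'e,'k::field) fpoly) = mon (a @ b)"
proof
  fix u
  show "pmul (mon a) (mon b :: ('v,'e,'k::field) fpoly) u = mon (a @ b) u"
  proof -
    have "(length a \<le> length u \<and> take (length a) u = a \<and> drop (length a) u = b) \<longleftrightarrow> u = a @ b"
    proof
      assume H: "length a \<le> length u \<and> take (length a) u = a \<and> drop (length a) u = b"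
      have "u = take (length a) u @ drop (length a) u" by simp
      with H show "u = a @ b" by simp
    next
      assume "u = a @ b" then show "length a \<le> length u \<and> take (length a) u = a \<and> drop (length a) u = b" by simp
    qed
    moreover have "pmul (mon a) (mon b :: ('v,'e,'k::field) fpoly) u = (if length a \<le> length u \<and> take (length a) u = a then mon b (drop (length a) u) else 0)"
      by (rule pmul_mon_left)
    ultimately show ?thesis by (cases "u = a @ b") (auto simp: mon_def)
  qed
qed

lemma pmul_mon_Nil_left: "pmul (mon []) q = q"
  by (rule ext) (simp add: pmul_mon_left)
lemma pmul_mon_Nil_right: "pmul q (mon []) = q"
  by (rule ext) (simp add: pmul_mon_right)

lemma pmul_mon_left_psub: "pmul (mon a) (psub p q) = psub (pmul (mon a) p) (pmul (mon a) q)"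
  by (rule ext) (simp add: pmul_mon_left psub_def)
lemma pmul_mon_right_psub: "pmul (psub p q) (mon a) = psub (pmul p (mon a)) (pmul q (mon a))"
  by (rule ext) (simp add: pmul_mon_right psub_def)
lemma pmul_mon_right_psmult: "pmul (psmult c p) (mon a) = psmult c (pmul p (mon a))"
  by (rule ext) (simp add: pmul_mon_right psmult_def)
lemma pmul_mon_left_psum: "pmul (mon a) (psum X f) = psum X (\<lambda>x. pmul (mon a) (f x))"
proof (rule ext)
  fix u show "pmul (mon a) (psum X f) u = psum X (\<lambda>x. pmul (mon a) (f x)) u"
  proof (cases "length a \<le> length u \<and> take (length a) u = a")
    case True then show ?thesis unfolding pmul_mon_left psum_def by (simp only: if_P)
  next
    case False then show ?thesis unfolding pmul_mon_left psum_def by (simp only: if_not_P if_False sum.neutral_const)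
  qed
qed
lemma pmul_mon_right_psum: "pmul (psum X f) (mon a) = psum X (\<lambda>x. pmul (f x) (mon a))"
proof (rule ext)
  fix u show "pmul (psum X f) (mon a) u = psum X (\<lambda>x. pmul (f x) (mon a)) u"
  proof (cases "length a \<le> length u \<and> drop (length u - length a) u = a")
    case True then show ?thesis unfolding pmul_mon_right psum_def by (simp only: if_P)
  next
    case False then show ?thesis unfolding pmul_mon_right psum_def by (simp only: if_not_P if_False sum.neutral_const)
  qed
qed

lemma psum_ideal:
  assumes "finite X" "\<And>x. x \<in> X \<Longrightarrow> f x \<in> gen_ideal V Ed R"
  shows "psum X f \<in> gen_ideal V Ed R"
  using assms
proof (induction X rule: finite_induct)
  case empty
  have "psum {} f = pzero" by (simp add: psum_def pzero_def)
  then show ?case using gen_ideal.zero by metis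
next
  case (insert x X)
  have eq: "psum (insert x X) f = padd (f x) (psum X f)"
    using insert.hyps by (simp add: psum_def padd_def fun_eq_iff)
  have a: "f x \<in> gen_ideal V Ed R" using insert.prems by simp
  have b: "psum X f \<in> gen_ideal V Ed R" using insert.IH insert.prems by simp
  show ?case unfolding eq by (rule gen_ideal.add[OF a b])
qed

lemma psum_psub: "psum X (\<lambda>x. psub (f x) (g x)) = psub (psum X f) (psum X g)"
  by (simp add: psum_def psub_def fun_eq_iff sum_subtractf)

definition sw :: "nat \<Rightarrow> nat \<Rightarrow> nat" where
  "sw k x = (if x = k then 0 else if x = 0 then k else x)"
lemma inj_sw: "inj (sw k)" unfolding inj_def sw_def by auto
lemma surj_sw: "surj (sw k)"
  by (rule surjI[where f="sw k"]) (simp add: sw_def)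

locale model =
  fixes V :: "'v set" and Ed :: "'e set" and r s :: "'e \<Rightarrow> 'v" and C S :: "'e set set"
    and \<phi> :: "'e set \<Rightarrow> 'e \<times> nat \<Rightarrow> nat"
  assumes sg: "separated_graph V Ed r s C"
    and SC: "S \<subseteq> Cfin C"
    and phi_inj: "\<And>Z. Z \<in> C \<Longrightarrow> inj_on (\<phi> Z) (Z \<times> UNIV)"
    and phi_surj: "\<And>Z. Z \<in> S \<Longrightarrow> \<phi> Z ` (Z \<times> UNIV) = UNIV"
begin

definition cls :: "'e \<Rightarrow> 'e set" where "cls e = (THE X. X \<in> C \<and> e \<in> X)"

lemma C_sub: "Y \<in> C \<Longrightarrow> Y \<subseteq> Ed"
  using sg unfolding separated_graph_def by blast

lemma cls_eq: assumes "Y \<in> C" "e \<in> Y" shows "cls e = Y"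
proof -
  have "e \<in> Ed" using assms C_sub by blast
  then have u: "\<exists>!X. X \<in> C \<and> e \<in> X" using sg unfolding separated_graph_def by blast
  show ?thesis unfolding cls_def using the1_equality[OF u] assms by blast
qed

lemma cls: assumes "e \<in> Ed" shows "cls e \<in> C" "e \<in> cls e"
proof -
  have "\<exists>!X. X \<in> C \<and> e \<in> X" using sg assms unfolding separated_graph_def by blast
  then obtain X where "X \<in> C" "e \<in> X" by blast
  then show "cls e \<in> C" "e \<in> cls e" using cls_eq by auto
qed

lemma phi_eq:
  assumes "e \<in> Ed" "e' \<in> cls e" "\<phi> (cls e) (e', m) = \<phi> (cls e) (e, n)"
  shows "e' = e \<and> m = n"
proof -
  have "(e', m) = (e, n)"
    using inj_onD[OF phi_inj[OF cls(1)[OF assms(1)]] assms(3)] cls(2)[OF assms(1)] assms(2) by simp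
  then show ?thesis by simp
qed

lemma the_phi: "e \<in> Ed \<Longrightarrow> (THE n. \<phi> (cls e) (e, n) = \<phi> (cls e) (e, m)) = m"
  by (rule the_equality) (auto dest: phi_eq[OF _ cls(2)])

definition act :: "('v,'e) gen \<Rightarrow> 'v \<times> nat \<Rightarrow> ('v \<times> nat) option" where
  "act g x = (case g of
      GV v \<Rightarrow> if fst x = v then Some x else None
    | GE e \<Rightarrow> if e \<in> Ed \<and> fst x = r e then Some (s e, \<phi> (cls e) (e, snd x)) else None
    | GS e \<Rightarrow> if e \<in> Ed \<and> fst x = s e \<and> (\<exists>n. \<phi> (cls e) (e, n) = snd x)
              then Some (r e, THE n. \<phi> (cls e) (e, n) = snd x) else None)"

lemma act_GV: "act (GV v) x = (if fst x = v then Some x else None)"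
  by (simp add: act_def)
lemma act_GE: "act (GE e) x = (if e \<in> Ed \<and> fst x = r e then Some (s e, \<phi> (cls e) (e, snd x)) else None)"
  by (simp add: act_def)
lemma act_GS_phi: "e \<in> Ed \<Longrightarrow> act (GS e) (w, \<phi> (cls e) (e, n)) = (if w = s e then Some (r e, n) else None)"
  by (auto simp add: act_def the_phi)
lemma act_GS_none: "\<not> (\<exists>n. \<phi> (cls e) (e, n) = m) \<Longrightarrow> act (GS e) (w, m) = None"
  by (auto simp add: act_def)
lemma act_GS_notE: "e \<notin> Ed \<Longrightarrow> act (GS e) x = None"
  by (auto simp add: act_def)

lemma act_GS_cases:
  "act (GS e) x = (if e \<in> Ed \<and> fst x = s e \<and> (\<exists>n. \<phi> (cls e) (e, n) = snd x)
              then Some (r e, THE n. \<phi> (cls e) (e, n) = snd x) else None)"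
  by (simp add: act_def)

lemma act_inj: assumes "act g x = Some z" "act g y = Some z" shows "x = y"
proof (cases g)
  case (GV v) then show ?thesis using assms by (auto simp: act_GV split: if_splits)
next
  case (GE e)
  then have "e \<in> Ed" "fst x = r e" "fst y = r e" "\<phi> (cls e) (e, snd x) = \<phi> (cls e) (e, snd y)"
    using assms by (auto simp: act_GE split: if_splits)
  then show ?thesis using phi_eq[OF _ cls(2)] by (metis prod.expand)
next
  case (GS e)
  from assms GS obtain nx ny where "e \<in> Ed" "fst x = s e" "fst y = s e"
    "\<phi> (cls e) (e, nx) = snd x" "\<phi> (cls e) (e, ny) = snd y"
    "(THE n. \<phi> (cls e) (e, n) = snd x) = (THE n. \<phi> (cls e) (e, n) = snd y)"
    by (auto simp: act_GS_cases split: if_splits)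
  then show ?thesis by (metis prod.expand the_phi)
qed

primrec wact :: "('v,'e) gen list \<Rightarrow> 'v \<times> nat \<Rightarrow> ('v \<times> nat) option" where
  "wact [] x = Some x"
| "wact (g # w) x = Option.bind (wact w x) (act g)"

lemma wact_append: "wact (a @ b) x = Option.bind (wact b x) (wact a)"
  by (induction a) auto

lemma wact_inj: "wact w x = Some z \<Longrightarrow> wact w y = Some z \<Longrightarrow> x = y"
proof (induction w arbitrary: z)
  case Nil then show ?case by simp
next
  case (Cons g w)
  from Cons.prems obtain x' y' where "wact w x = Some x'" "act g x' = Some z"
     "wact w y = Some y'" "act g y' = Some z"
    by (auto split: Option.bind_splits)
  then show ?case using Cons.IH act_inj by metis
qed

definition F :: "('v,'e,'k::field) fpoly \<Rightarrow> 'v \<times> nat \<Rightarrow> 'v \<times> nat \<Rightarrow> 'k" where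
  "F p x y = (\<Sum>w\<in>supp p. if wact w x = Some y then p w else 0)"

lemma F_superset: "finite A \<Longrightarrow> supp p \<subseteq> A \<Longrightarrow> F p x y = (\<Sum>w\<in>A. if wact w x = Some y then p w else 0)"
  unfolding F_def by (rule sum.mono_neutral_left) (auto simp: supp_def)

lemma F_mon: "F (mon w :: ('v,'e,'k::field) fpoly) x y = (if wact w x = Some y then 1 else 0)"
  unfolding F_def supp_mon by (simp add: mon_def)

lemma F_pzero: "F (pzero :: ('v,'e,'k::field) fpoly) x y = 0"
  by (simp add: F_def)

lemma F_psub:
  assumes "finite (supp p)" "finite (supp q)"
  shows "F (psub p q) x y = F p x y - F q x y"
proof -
  let ?A = "supp p \<union> supp q"
  have "F (psub p q) x y = (\<Sum>w\<in>?A. if wact w x = Some y then psub p q w else 0)"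
    using assms supp_psub by (intro F_superset) auto
  also have "\<dots> = (\<Sum>w\<in>?A. (if wact w x = Some y then p w else 0) - (if wact w x = Some y then q w else 0))"
    by (rule sum.cong) (auto simp: psub_def)
  also have "\<dots> = F p x y - F q x y"
    using assms by (simp add: sum_subtractf F_superset[of ?A])
  finally show ?thesis .
qed

lemma F_padd:
  assumes "finite (supp p)" "finite (supp q)"
  shows "F (padd p q) x y = F p x y + F q x y"
proof -
  let ?A = "supp p \<union> supp q"
  have "F (padd p q) x y = (\<Sum>w\<in>?A. if wact w x = Some y then padd p q w else 0)"
    using assms supp_padd by (intro F_superset) auto
  also have "\<dots> = (\<Sum>w\<in>?A. (if wact w x = Some y then p w else 0) + (if wact w x = Some y then q w else 0))"
    by (rule sum.cong) (auto simp: padd_def)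
  also have "\<dots> = F p x y + F q x y"
    using assms by (simp add: sum.distrib F_superset[of ?A])
  finally show ?thesis .
qed

lemma F_psmult:
  assumes "finite (supp p)"
  shows "F (psmult c p) x y = c * F p x y"
proof -
  have "F (psmult c p) x y = (\<Sum>w\<in>supp p. if wact w x = Some y then psmult c p w else 0)"
    using assms supp_psmult by (intro F_superset) auto
  also have "\<dots> = c * F p x y"
    unfolding F_def sum_distrib_left by (rule sum.cong) (auto simp: psmult_def)
  finally show ?thesis .
qed

lemma F_psum:
  assumes "finite X" "\<And>a. a \<in> X \<Longrightarrow> finite (supp (f a))"
  shows "F (psum X f) x y = (\<Sum>a\<in>X. F (f a) x y)"
proof -
  let ?A = "\<Union>a\<in>X. supp (f a)"
  have fA: "finite ?A" using assms by auto
  have "F (psum X f) x y = (\<Sum>w\<in>?A. if wact w x = Some y then psum X f w else 0)"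
    using fA supp_psum by (intro F_superset) auto
  also have "\<dots> = (\<Sum>w\<in>?A. \<Sum>a\<in>X. if wact w x = Some y then f a w else 0)"
    by (rule sum.cong) (auto simp: psum_def)
  also have "\<dots> = (\<Sum>a\<in>X. \<Sum>w\<in>?A. if wact w x = Some y then f a w else 0)"
    by (rule sum.swap)
  also have "\<dots> = (\<Sum>a\<in>X. F (f a) x y)"
    by (rule sum.cong) (use fA in \<open>auto intro!: F_superset[symmetric]\<close>)
  finally show ?thesis .
qed

lemma finite_supp_psum: "finite X \<Longrightarrow> (\<And>a. a \<in> X \<Longrightarrow> finite (supp (f a))) \<Longrightarrow> finite (supp (psum X f))"
  by (rule finite_subset[OF supp_psum]) auto

definition good :: "('v,'e,'k::field) fpoly \<Rightarrow> bool" where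
  "good p \<longleftrightarrow> finite (supp p) \<and> (\<forall>x y. F p x y = 0)"

lemma good_psub:
  assumes "finite (supp p)" "finite (supp q)" "\<And>x y. F p x y = F q x y"
  shows "good (psub p q)"
proof -
  have "finite (supp (psub p q))" by (rule finite_subset[OF supp_psub]) (use assms in auto)
  moreover have "F (psub p q) x y = 0" for x y
    using F_psub[OF assms(1,2), of x y] assms(3)[of x y] by simp
  ultimately show ?thesis unfolding good_def by blast
qed

end

lemma Q_at: "pmul (mon a) (pmul p (mon b)) (a @ w @ b) = p w"
  by (simp add: pmul_mon_left pmul_mon_right)

lemma Q_supp:
  assumes H: "pmul (mon a) (pmul p (mon b)) u \<noteq> 0"
  shows "\<exists>w. u = a @ w @ b \<and> p w \<noteq> 0"
proof -
  define u1 where "u1 = drop (length a) u"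
  have e1: "pmul (mon a) (pmul p (mon b)) u = (if length a \<le> length u \<and> take (length a) u = a then pmul p (mon b) u1 else 0)"
    unfolding u1_def by (rule pmul_mon_left)
  from H e1 have c1: "take (length a) u = a" and H1: "pmul p (mon b) u1 \<noteq> 0"
    by (auto split: if_splits)
  define w where "w = take (length u1 - length b) u1"
  have e2: "pmul p (mon b) u1 = (if length b \<le> length u1 \<and> drop (length u1 - length b) u1 = b then p w else 0)"
    unfolding w_def by (rule pmul_mon_right)
  from H1 e2 have c2: "drop (length u1 - length b) u1 = b" and H2: "p w \<noteq> 0"
    by (auto split: if_splits)
  have "u = a @ u1" using c1 unfolding u1_def by (metis append_take_drop_id)
  moreover have "u1 = w @ b" using c2 unfolding w_def by (metis append_take_drop_id)
  ultimately show ?thesis using H2 by blast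
qed

context model
begin

lemma good_mult:
  assumes "good p" shows "good (pmul (mon a) (pmul p (mon b)))"
proof -
  let ?Q = "pmul (mon a) (pmul p (mon b))"
  let ?h = "\<lambda>w. a @ w @ b"
  from assms have fp: "finite (supp p)" and zp: "\<And>x y. F p x y = 0" by (auto simp: good_def)
  have sub: "supp ?Q \<subseteq> ?h ` supp p"
  proof
    fix u assume "u \<in> supp ?Q"
    then have "?Q u \<noteq> 0" by (simp add: supp_def)
    from Q_supp[OF this] obtain w where "u = a @ w @ b" "p w \<noteq> 0" by blast
    then show "u \<in> ?h ` supp p" by (auto simp: supp_def)
  qed
  have fin: "finite (?h ` supp p)" using fp by simp
  have inj: "inj_on ?h (supp p)" by (auto simp: inj_on_def)
  have "F ?Q x y = 0" for x y
  proof -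
    have "F ?Q x y = (\<Sum>u\<in>?h ` supp p. if wact u x = Some y then ?Q u else 0)"
      using F_superset[OF fin sub] .
    also have "\<dots> = (\<Sum>w\<in>supp p. if wact (a @ w @ b) x = Some y then p w else 0)"
      by (simp add: sum.reindex[OF inj]) (simp only: Q_at)
    also have "\<dots> = 0"
    proof (cases "wact b x")
      case None then show ?thesis by (simp add: wact_append)
    next
      case (Some z)
      show ?thesis
      proof (cases "\<exists>t. wact a t = Some y")
        case True
        then obtain t where t: "wact a t = Some y" by blast
        have "(wact (a @ w @ b) x = Some y) = (wact w z = Some t)" for w
        proof
          assume "wact (a @ w @ b) x = Some y"
          then obtain t' where "wact w z = Some t'" "wact a t' = Some y"
            using Some by (auto simp: wact_append split: Option.bind_splits)
          then show "wact w z = Some t" using wact_inj[OF _ t] by metis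
        next
          assume "wact w z = Some t" then show "wact (a @ w @ b) x = Some y"
            using Some t by (simp add: wact_append)
        qed
        then have "(\<Sum>w\<in>supp p. if wact (a @ w @ b) x = Some y then p w else 0) = F p z t"
          by (simp add: F_def)
        then show ?thesis using zp by simp
      next
        case False
        then have "wact (a @ w @ b) x \<noteq> Some y" for w
          using Some by (auto simp: wact_append split: Option.bind_splits)
        then show ?thesis by simp
      qed
    qed
    finally show ?thesis .
  qed
  moreover have "finite (supp ?Q)" using fin sub by (rule finite_subset[rotated])
  ultimately show ?thesis unfolding good_def by blast
qed

lemma good_same: "(\<And>x. wact u x = wact u' x) \<Longrightarrow> good (psub (mon u) (mon u' :: ('v,'e,'k::field) fpoly))"
  by (rule good_psub) (auto simp: F_mon)

lemma good_none: "(\<And>x. wact u x = None) \<Longrightarrow> good (psub (mon u) (pzero :: ('v,'e,'k::field) fpoly))"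
  by (rule good_psub) (auto simp: F_mon F_pzero)

lemma ee_star:
  assumes e: "e \<in> Ed"
  shows "wact [GE e, GS e] x = (if fst x = s e \<and> (\<exists>n. \<phi> (cls e) (e, n) = snd x) then Some x else None)"
proof (cases x)
  case (Pair w m)
  show ?thesis
  proof (cases "w = s e \<and> (\<exists>n. \<phi> (cls e) (e, n) = m)")
    case True
    then obtain n where n: "\<phi> (cls e) (e, n) = m" and w: "w = s e" by blast
    show ?thesis using e by (auto simp: Pair w n[symmetric] act_GS_phi act_GE)
  next
    case False
    then show ?thesis using e by (auto simp: Pair act_GS_cases)
  qed
qed

lemma good_rel1: "good (psub (mon [GV v, GV w]) (if v = w then mon [GV v] else (pzero :: ('v,'e,'k::field) fpoly)))"
proof (cases "v = w")
  case True
  then show ?thesis by (simp, intro good_same) (simp add: act_GV)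
next
  case False
  then show ?thesis by (simp, intro good_none) (simp add: act_GV)
qed

lemma good_rel2: "good (psub (mon [GV (s e), GE e]) (mon [GE e] :: ('v,'e,'k::field) fpoly))"
  by (intro good_same) (simp add: act_GV act_GE)
lemma good_rel3: "good (psub (mon [GE e, GV (r e)]) (mon [GE e] :: ('v,'e,'k::field) fpoly))"
  by (intro good_same) (simp add: act_GV act_GE)
lemma good_rel4: "good (psub (mon [GV (r e), GS e]) (mon [GS e] :: ('v,'e,'k::field) fpoly))"
  by (intro good_same) (simp add: act_GV act_GS_cases)
lemma good_rel5: "good (psub (mon [GS e, GV (s e)]) (mon [GS e] :: ('v,'e,'k::field) fpoly))"
  by (intro good_same) (simp add: act_GV act_GS_cases)

lemma good_rel6:
  assumes Y: "Y \<in> C" "e \<in> Y" "f \<in> Y"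
  shows "good (psub (mon [GS e, GE f]) (if e = f then mon [GV (r e)] else (pzero :: ('v,'e,'k::field) fpoly)))"
proof -
  have eE: "e \<in> Ed" and fE: "f \<in> Ed" using Y C_sub by auto
  have ce: "cls e = Y" and cf: "cls f = Y" using Y cls_eq by auto
  show ?thesis
  proof (cases "e = f")
    case True
    have "wact [GS e, GE e] x = wact [GV (r e)] x" for x
    proof (cases x)
      case (Pair w n)
      show ?thesis using eE by (simp add: Pair act_GE act_GV act_GS_phi)
    qed
    then show ?thesis using True by (simp, intro good_same) simp
  next
    case False
    have "wact [GS e, GE f] x = None" for x
    proof (cases x)
      case (Pair w n)
      have "\<not> (\<exists>n'. \<phi> (cls e) (e, n') = \<phi> (cls e) (f, n))"
      proof
        assume "\<exists>n'. \<phi> (cls e) (e, n') = \<phi> (cls e) (f, n)"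
        then obtain n' where "\<phi> (cls e) (f, n) = \<phi> (cls e) (e, n')" by metis
        from phi_eq[OF eE _ this] have "f = e" using ce Y(3) by simp
        then show False using False by simp
      qed
      then show ?thesis using fE cf ce by (simp add: Pair act_GE act_GS_none)
    qed
    then show ?thesis using False by (simp, intro good_none) simp
  qed
qed

lemma good_rel7:
  assumes v: "v \<in> V" and XS: "X \<in> S" and XC: "X \<in> Cv s C v"
  shows "good (psub (mon [GV v]) (psum X (\<lambda>e. mon [GE e, GS e]) :: ('v,'e,'k::field) fpoly))"
proof (rule good_psub)
  have fX: "finite X" and XC': "X \<in> C" using XS SC XC by (auto simp: Cfin_def Cv_def)
  have sX: "\<And>e. e \<in> X \<Longrightarrow> s e = v" using XC by (auto simp: Cv_def)
  have XE: "X \<subseteq> Ed" using XC' C_sub by auto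
  have cX: "\<And>e. e \<in> X \<Longrightarrow> cls e = X" using XC' cls_eq by auto
  show "finite (supp (mon [GV v] :: ('v,'e,'k::field) fpoly))" by simp
  show "finite (supp (psum X (\<lambda>e. mon [GE e, GS e]) :: ('v,'e,'k::field) fpoly))"
    using fX by (intro finite_supp_psum) auto
  fix x y
  have "F (psum X (\<lambda>e. mon [GE e, GS e]) :: ('v,'e,'k::field) fpoly) x y
      = (\<Sum>e\<in>X. if fst x = v \<and> (\<exists>n. \<phi> X (e, n) = snd x) \<and> x = y then 1 else 0)"
  proof -
    have t: "F (mon [GE e, GS e] :: ('v,'e,'k::field) fpoly) x y = (if fst x = v \<and> (\<exists>n. \<phi> X (e, n) = snd x) \<and> x = y then 1 else 0)"
      if e: "e \<in> X" for e
      unfolding F_mon ee_star[OF XE[THEN subsetD, OF e]] using e cX sX by auto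
    show ?thesis using fX by (simp add: F_psum t)
  qed
  also have "\<dots> = (if fst x = v \<and> x = y then 1 else 0)"
  proof (cases "fst x = v \<and> x = y")
    case False then show ?thesis by auto
  next
    case True
    obtain e0 n0 where e0: "e0 \<in> X" "\<phi> X (e0, n0) = snd x"
      using phi_surj[OF XS] by (metis (no_types, lifting) UNIV_I imageE mem_Sigma_iff prod.collapse)
    have "\<And>e. e \<in> X \<Longrightarrow> (\<exists>n. \<phi> X (e, n) = snd x) \<longleftrightarrow> e = e0"
    proof -
      fix e assume e: "e \<in> X"
      show "(\<exists>n. \<phi> X (e, n) = snd x) \<longleftrightarrow> e = e0"
      proof
        assume "\<exists>n. \<phi> X (e, n) = snd x"
        then obtain n where "\<phi> X (e, n) = \<phi> X (e0, n0)" using e0 by auto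
        then show "e = e0" using inj_onD[OF phi_inj[OF XC']] e e0 by blast
      next
        assume "e = e0" then show "\<exists>n. \<phi> X (e, n) = snd x" using e0 by blast
      qed
    qed
    then have "(\<Sum>e\<in>X. if fst x = v \<and> (\<exists>n. \<phi> X (e, n) = snd x) \<and> x = y then 1 else 0)
        = (\<Sum>e\<in>X. if e = e0 then (1::'k) else 0)"
      using True by (intro sum.cong) auto
    also have "\<dots> = 1" using fX e0 by simp
    moreover from True have xv: "fst x = v" and xy: "x = y" by auto
    ultimately show ?thesis by simp
  qed
  also have "\<dots> = F (mon [GV v] :: ('v,'e,'k::field) fpoly) x y"
    by (cases x) (auto simp: F_mon act_GV)
  finally show "F (mon [GV v] :: ('v,'e,'k::field) fpoly) x y = F (psum X (\<lambda>e. mon [GE e, GS e])) x y" by simp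
qed

lemma good_rel: "p \<in> CL_relations V Ed r s C S \<Longrightarrow> good p"
  unfolding CL_relations_def
  by (auto intro: good_rel1 good_rel2 good_rel3 good_rel4 good_rel5 good_rel6 good_rel7)

lemma ideal_good: "p \<in> gen_ideal V Ed (CL_relations V Ed r s C S) \<Longrightarrow> good p"
proof (induction rule: gen_ideal.induct)
  case (base p) then show ?case by (rule good_rel)
next
  case zero show ?case by (simp add: good_def F_pzero)
next
  case (add p q)
  then have "finite (supp p)" "finite (supp q)" by (auto simp: good_def)
  moreover have "finite (supp (padd p q))" by (rule finite_subset[OF supp_padd]) (use calculation in auto)
  ultimately show ?case using add.IH by (auto simp: good_def F_padd)
next
  case (smult p c)
  then have "finite (supp p)" by (auto simp: good_def)
  moreover have "finite (supp (psmult c p))" by (rule finite_subset[OF supp_psmult]) (use calculation in auto)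
  ultimately show ?case using smult.IH by (auto simp: good_def F_psmult)
next
  case (mult p a b)
  then show ?case by (intro good_mult) simp
qed

lemma CL_eq_F:
  assumes "CL_eq V Ed r s C S p q" "finite (supp p)" "finite (supp q)"
  shows "F p x y = F q x y"
proof -
  have "good (psub p q)" using assms(1) ideal_good unfolding CL_eq_def CL_ideal_def by blast
  then have "F (psub p q) x y = 0" unfolding good_def by blast
  then show ?thesis using F_psub[OF assms(2,3)] by simp
qed

end

context model
begin
lemma not_CL_eq:
  assumes "finite (supp p)" "finite (supp q)" "F p x y \<noteq> F q x y"
  shows "\<not> CL_eq V Ed r s C S p q"
  using CL_eq_F[OF _ assms(1,2)] assms(3) by blast
end

lemma model_I:
  assumes "separated_graph V Ed r s C" "S \<subseteq> Cfin C"
    "\<And>Z. Z \<in> C \<Longrightarrow> inj_on (\<phi> Z) (Z \<times> UNIV)" "\<And>Z. Z \<in> S \<Longrightarrow> \<phi> Z ` (Z \<times> UNIV) = UNIV"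
  shows "model V Ed r s C S \<phi>"
  using assms by (simp add: model_def)

definition beta :: "'e set \<Rightarrow> 'e \<times> nat \<Rightarrow> nat" where
  "beta Z = to_nat_on (Z \<times> (UNIV :: nat set))"

lemma beta_bij:
  assumes sg: "separated_graph V Ed r s C" and cE: "countable Ed" and Z: "Z \<in> C"
  shows "inj_on (beta Z) (Z \<times> UNIV)" "beta Z ` (Z \<times> UNIV) = UNIV"
proof -
  have "Z \<noteq> {}" "Z \<subseteq> Ed" using sg Z unfolding separated_graph_def by auto
  then have "countable (Z \<times> (UNIV :: nat set))" using cE countable_subset by blast
  moreover have "infinite (Z \<times> (UNIV :: nat set))"
    using \<open>Z \<noteq> {}\<close> finite_cartesian_productD2 by blast
  ultimately have "bij_betw (beta Z) (Z \<times> UNIV) UNIV" unfolding beta_def by (rule to_nat_on_infinite)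
  then show "inj_on (beta Z) (Z \<times> UNIV)" "beta Z ` (Z \<times> UNIV) = UNIV" by (auto simp: bij_betw_def)
qed

lemma inj_sw_comp: "inj_on g A \<Longrightarrow> inj_on (sw k \<circ> g) A"
  using inj_sw by (metis comp_inj_on inj_on_subset subset_UNIV)
lemma surj_sw_comp: "g ` A = UNIV \<Longrightarrow> (sw k \<circ> g) ` A = UNIV"
  by (metis image_comp surj_sw)
lemma inj_Suc_comp: "inj_on g A \<Longrightarrow> inj_on (Suc \<circ> g) A"
  by (simp add: inj_on_def)
lemma sw_self: "sw k k = 0" by (simp add: sw_def)
lemma sw_eq0: "sw k x = 0 \<longleftrightarrow> x = k" by (auto simp: sw_def)

lemma Cv_facts: "X \<in> Cv s C v \<Longrightarrow> X \<in> C \<and> (\<forall>e\<in>X. s e = v)"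
  by (simp add: Cv_def)

lemma claim1:
  assumes sg: "separated_graph V Ed r s C" and cE: "countable Ed" and S: "S \<subseteq> Cfin C" and e: "e \<in> Ed"
  shows "\<not> CL_eq V Ed r s C S (mon [GE e]) (pzero :: ('v,'e,'k::field) fpoly)"
proof -
  interpret M: model V Ed r s C S beta
    by (rule model_I[OF sg S]) (use beta_bij[OF sg cE] S in \<open>auto simp: Cfin_def\<close>)
  let ?x = "(r e, 0::nat)" let ?y = "(s e, beta (M.cls e) (e, 0))"
  have "M.wact [GE e] ?x = Some ?y" using e by (simp add: M.act_GE)
  then have "M.F (mon [GE e] :: ('v,'e,'k) fpoly) ?x ?y \<noteq> M.F (pzero :: ('v,'e,'k) fpoly) ?x ?y"
    by (simp add: M.F_mon M.F_pzero)
  then show ?thesis by (intro M.not_CL_eq) auto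
qed

lemma claim2:
  assumes sg: "separated_graph V Ed r s C" and cE: "countable Ed" and S: "S \<subseteq> Cfin C"
  shows "\<not> CL_eq V Ed r s C S (mon [GV v]) (pzero :: ('v,'e,'k::field) fpoly)"
proof -
  interpret M: model V Ed r s C S beta
    by (rule model_I[OF sg S]) (use beta_bij[OF sg cE] S in \<open>auto simp: Cfin_def\<close>)
  let ?x = "(v, 0::nat)"
  have "M.wact [GV v] ?x = Some ?x" by (simp add: M.act_GV)
  then have "M.F (mon [GV v] :: ('v,'e,'k) fpoly) ?x ?x \<noteq> M.F (pzero :: ('v,'e,'k) fpoly) ?x ?x"
    by (simp add: M.F_mon M.F_pzero)
  then show ?thesis by (intro M.not_CL_eq) auto
qed


lemma phi_model:
  assumes sg: "separated_graph V Ed r s C" and cE: "countable Ed" and S: "S \<subseteq> Cfin C"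
    and H: "\<And>Z. Z \<in> C \<Longrightarrow> \<phi> Z = beta Z \<or> (\<exists>k. \<phi> Z = sw k \<circ> beta Z) \<or> (Z \<notin> S \<and> \<phi> Z = Suc \<circ> beta Z)"
  shows "model V Ed r s C S \<phi>"
proof (rule model_I[OF sg S])
  fix Z assume Z: "Z \<in> C"
  note b = beta_bij[OF sg cE Z]
  from H[OF Z] show "inj_on (\<phi> Z) (Z \<times> UNIV)"
  proof (elim disjE exE conjE)
    assume "\<phi> Z = beta Z" then show ?thesis using b by simp
  next
    fix k assume "\<phi> Z = sw k \<circ> beta Z" then show ?thesis using b inj_sw_comp by simp
  next
    assume "\<phi> Z = Suc \<circ> beta Z" then show ?thesis using b inj_Suc_comp by simp
  qed
next
  fix Z assume ZS: "Z \<in> S"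
  then have Z: "Z \<in> C" using S by (auto simp: Cfin_def)
  note b = beta_bij[OF sg cE Z]
  from H[OF Z] show "\<phi> Z ` (Z \<times> UNIV) = UNIV"
  proof (elim disjE exE conjE)
    assume "\<phi> Z = beta Z" then show ?thesis using b by simp
  next
    fix k assume "\<phi> Z = sw k \<circ> beta Z" then show ?thesis using b surj_sw_comp by simp
  next
    assume "Z \<notin> S" then show ?thesis using ZS by simp
  qed
qed

lemma claim3:
  assumes sg: "separated_graph V Ed r s C" and cE: "countable Ed" and S: "S \<subseteq> Cfin C"
    and X: "X \<in> Cv s C v" and Y: "Y \<in> Cv s C v" and XY: "X \<noteq> Y" and e: "e \<in> X" and f: "f \<in> Y"
  shows "\<not> CL_eq V Ed r s C S (mon [GS e, GE f]) (pzero :: ('v,'e,'k::field) fpoly)"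
proof -
  define \<phi> where "\<phi> = (\<lambda>Z. if Z = X then sw (beta X (e, 0)) \<circ> beta X
     else if Z = Y then sw (beta Y (f, 0)) \<circ> beta Y else beta Z)"
  have XC: "X \<in> C" and YC: "Y \<in> C" and se: "s e = v" and sf: "s f = v" using X Y e f by (auto simp: Cv_def)
  interpret M: model V Ed r s C S \<phi>
  proof (rule phi_model[OF sg cE S])
    fix Z assume "Z \<in> C"
    show "\<phi> Z = beta Z \<or> (\<exists>k. \<phi> Z = sw k \<circ> beta Z) \<or> (Z \<notin> S \<and> \<phi> Z = Suc \<circ> beta Z)"
    proof (cases "Z = X")
      case True then have "\<phi> Z = sw (beta X (e, 0)) \<circ> beta Z" by (simp add: \<phi>_def)
      then show ?thesis by blast
    next
      case F: False
      show ?thesis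
      proof (cases "Z = Y")
        case True then have "\<phi> Z = sw (beta Y (f, 0)) \<circ> beta Z" using F by (simp add: \<phi>_def)
        then show ?thesis by blast
      next
        case False then show ?thesis using F by (simp add: \<phi>_def)
      qed
    qed
  qed
  have eE: "e \<in> Ed" and fE: "f \<in> Ed" using XC YC e f M.C_sub by auto
  have ce: "M.cls e = X" and cf: "M.cls f = Y" using XC YC e f M.cls_eq by auto
  have p1: "\<phi> Y (f, 0) = 0" using XY by (simp add: \<phi>_def sw_self)
  have p2: "\<phi> X (e, 0) = 0" by (simp add: \<phi>_def sw_self)
  have "M.act (GE f) (r f, 0) = Some (v, 0)" using fE by (simp add: M.act_GE cf p1 sf)
  moreover have "M.act (GS e) (v, 0) = Some (r e, 0)"
    using M.act_GS_phi[OF eE, of v 0] by (simp add: ce p2 se)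
  ultimately have "M.wact [GS e, GE f] (r f, 0) = Some (r e, 0)" by simp
  then have "M.F (mon [GS e, GE f] :: ('v,'e,'k) fpoly) (r f, 0) (r e, 0) \<noteq> M.F (pzero :: ('v,'e,'k) fpoly) (r f, 0) (r e, 0)"
    by (simp add: M.F_mon M.F_pzero)
  then show ?thesis by (intro M.not_CL_eq) auto
qed

lemma claim4_neg:
  assumes sg: "separated_graph V Ed r s C" and cE: "countable Ed" and S: "S \<subseteq> Cfin C"
    and X: "X \<in> Cv s C v" and XS: "X \<notin> S" and fX: "finite X"
  shows "\<not> CL_eq V Ed r s C S (eestar X) (mon [GV v] :: ('v,'e,'k::field) fpoly)"
proof -
  define \<phi> where "\<phi> = (\<lambda>Z. if Z = X then Suc \<circ> beta X else beta Z)"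
  have XC: "X \<in> C" using X by (auto simp: Cv_def)
  interpret M: model V Ed r s C S \<phi>
  proof (rule phi_model[OF sg cE S])
    fix Z assume "Z \<in> C"
    show "\<phi> Z = beta Z \<or> (\<exists>k. \<phi> Z = sw k \<circ> beta Z) \<or> (Z \<notin> S \<and> \<phi> Z = Suc \<circ> beta Z)"
    proof (cases "Z = X")
      case True then show ?thesis using XS by (simp add: \<phi>_def)
    next
      case False then show ?thesis by (simp add: \<phi>_def)
    qed
  qed
  have XE: "X \<subseteq> Ed" using XC M.C_sub by auto
  have "M.F (mon [GE e, GS e] :: ('v,'e,'k) fpoly) (v, 0) (v, 0) = 0" if e: "e \<in> X" for e
  proof -
    have "M.cls e = X" using XC e M.cls_eq by auto
    then have "\<not> (\<exists>n. \<phi> (M.cls e) (e, n) = 0)" by (simp add: \<phi>_def)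
    then show ?thesis unfolding M.F_mon M.ee_star[OF XE[THEN subsetD, OF e]] by auto
  qed
  then have "M.F (eestar X :: ('v,'e,'k) fpoly) (v, 0) (v, 0) = 0"
    unfolding eestar_def using fX by (simp add: M.F_psum)
  moreover have "M.F (mon [GV v] :: ('v,'e,'k) fpoly) (v, 0) (v, 0) = 1"
    by (simp add: M.F_mon M.act_GV)
  ultimately show ?thesis
    by (intro M.not_CL_eq[where x="(v, 0)" and y="(v, 0)"]) (use fX in \<open>auto simp: eestar_def intro!: M.finite_supp_psum\<close>)
qed

lemma claim5:
  assumes sg: "separated_graph V Ed r s C" and cE: "countable Ed" and S: "S \<subseteq> Cfin C"
    and X: "X \<in> C - S" and Y: "Y \<in> C - S" and fX: "finite X" and fY: "finite Y" and XY: "X \<noteq> Y"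
  shows "\<not> CL_eq V Ed r s C S (eestar X) (eestar Y :: ('v,'e,'k::field) fpoly)"
proof -
  have "X \<noteq> {}" using sg X unfolding separated_graph_def by auto
  then obtain e where e: "e \<in> X" by blast
  define \<phi> where "\<phi> = (\<lambda>Z. if Z = X then sw (beta X (e, 0)) \<circ> beta X
     else if Z = Y then Suc \<circ> beta Y else beta Z)"
  interpret M: model V Ed r s C S \<phi>
  proof (rule phi_model[OF sg cE S])
    fix Z assume "Z \<in> C"
    show "\<phi> Z = beta Z \<or> (\<exists>k. \<phi> Z = sw k \<circ> beta Z) \<or> (Z \<notin> S \<and> \<phi> Z = Suc \<circ> beta Z)"
    proof (cases "Z = X")
      case True then have "\<phi> Z = sw (beta X (e, 0)) \<circ> beta Z" by (simp add: \<phi>_def)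
      then show ?thesis by blast
    next
      case F: False
      show ?thesis
      proof (cases "Z = Y")
        case True then show ?thesis using F Y by (simp add: \<phi>_def)
      next
        case False then show ?thesis using F by (simp add: \<phi>_def)
      qed
    qed
  qed
  have XC: "X \<in> C" and YC: "Y \<in> C" using X Y by auto
  have XE: "X \<subseteq> Ed" and YE: "Y \<subseteq> Ed" using XC YC M.C_sub by auto
  let ?x = "(s e, 0::nat)"
  have binj: "inj_on (beta X) (X \<times> UNIV)" using beta_bij[OF sg cE XC] by simp
  have tX: "M.F (mon [GE e', GS e'] :: ('v,'e,'k) fpoly) ?x ?x = (if e' = e then 1 else 0)" if e': "e' \<in> X" for e'
  proof -
    have c: "M.cls e' = X" using XC e' M.cls_eq by auto
    have "(\<exists>n. \<phi> X (e', n) = 0) \<longleftrightarrow> e' = e"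
    proof
      assume "\<exists>n. \<phi> X (e', n) = 0"
      then obtain n where "beta X (e', n) = beta X (e, 0)" by (auto simp: \<phi>_def sw_eq0)
      then show "e' = e" using inj_onD[OF binj] e e' by blast
    next
      assume "e' = e" then have "\<phi> X (e', 0) = 0" by (simp add: \<phi>_def sw_self)
      then show "\<exists>n. \<phi> X (e', n) = 0" by blast
    qed
    then show ?thesis unfolding M.F_mon M.ee_star[OF XE[THEN subsetD, OF e']] c by auto
  qed
  have tY: "M.F (mon [GE f, GS f] :: ('v,'e,'k) fpoly) ?x ?x = 0" if f: "f \<in> Y" for f
  proof -
    have c: "M.cls f = Y" using YC f M.cls_eq by auto
    have "\<not> (\<exists>n. \<phi> Y (f, n) = 0)" using XY by (simp add: \<phi>_def)
    then show ?thesis unfolding M.F_mon M.ee_star[OF YE[THEN subsetD, OF f]] c by auto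
  qed
  have "M.F (eestar X :: ('v,'e,'k) fpoly) ?x ?x = 1"
    unfolding eestar_def using fX e by (simp add: M.F_psum tX)
  moreover have "M.F (eestar Y :: ('v,'e,'k) fpoly) ?x ?x = 0"
    unfolding eestar_def using fY by (simp add: M.F_psum tY)
  ultimately show ?thesis
    by (intro M.not_CL_eq[where x="?x" and y="?x"]) (use fX fY in \<open>auto simp: eestar_def intro!: M.finite_supp_psum\<close>)
qed

lemma psum_cong: "(\<And>x. x \<in> X \<Longrightarrow> f x = g x) \<Longrightarrow> psum X f = psum X g"
  by (simp add: psum_def fun_eq_iff)

lemma claim4_pos:
  assumes sg: "separated_graph V Ed r s C" and X: "X \<in> Cv s C v" and fX: "finite X"
  shows "CL_eq V Ed r s C S (pmul (eestar X) (mon [GV v])) (eestar X :: ('v,'e,'k::field) fpoly)"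
    and "CL_eq V Ed r s C S (eestar X) (pmul (mon [GV v]) (eestar X) :: ('v,'e,'k) fpoly)"
proof -
  have XC: "X \<in> C" and sX: "\<And>e. e \<in> X \<Longrightarrow> s e = v" using X by (auto simp: Cv_def)
  have XE: "X \<subseteq> Ed" using sg XC unfolding separated_graph_def by blast
  let ?I = "CL_ideal V Ed r s C S :: ('v,'e,'k) fpoly set"
  let ?R = "\<lambda>e. psub (mon [GS e, GV (s e)]) (mon [GS e]) :: ('v,'e,'k) fpoly"
  have eq1: "psub (pmul (eestar X) (mon [GV v])) (eestar X :: ('v,'e,'k) fpoly)
     = psum X (\<lambda>e. pmul (mon [GE e]) (pmul (?R e) (mon [])))"
  proof -
    have "psub (pmul (eestar X) (mon [GV v])) (eestar X :: ('v,'e,'k) fpoly)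
      = psum X (\<lambda>e. psub (mon [GE e, GS e, GV v]) (mon [GE e, GS e]))"
      unfolding eestar_def pmul_mon_right_psum psum_psub by (simp add: pmul_mon_mon)
    also have "\<dots> = psum X (\<lambda>e. pmul (mon [GE e]) (pmul (?R e) (mon [])))"
      by (rule psum_cong) (simp add: pmul_mon_Nil_right pmul_mon_left_psub pmul_mon_mon sX)
    finally show ?thesis .
  qed
  have "psum X (\<lambda>e. pmul (mon [GE e]) (pmul (?R e) (mon []))) \<in> ?I"
    unfolding CL_ideal_def
  proof (rule psum_ideal[OF fX])
    fix e assume e: "e \<in> X"
    have "?R e \<in> CL_relations V Ed r s C S" using e XE unfolding CL_relations_def by blast
    moreover have "list_all (valid_gen V Ed) [GE e]" using e XE by (auto simp: valid_gen_def)
    ultimately show "pmul (mon [GE e]) (pmul (?R e) (mon [])) \<in> gen_ideal V Ed (CL_relations V Ed r s C S)"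
      by (intro gen_ideal.mult gen_ideal.base) auto
  qed
  then show "CL_eq V Ed r s C S (pmul (eestar X) (mon [GV v])) (eestar X :: ('v,'e,'k::field) fpoly)"
    unfolding CL_eq_def eq1 .
  let ?R' = "\<lambda>e. psub (mon [GV (s e), GE e]) (mon [GE e]) :: ('v,'e,'k) fpoly"
  have eq2: "psub (eestar X) (pmul (mon [GV v]) (eestar X) :: ('v,'e,'k) fpoly)
     = psum X (\<lambda>e. pmul (mon []) (pmul (psmult (-1) (?R' e)) (mon [GS e])))"
  proof -
    have "psub (eestar X) (pmul (mon [GV v]) (eestar X) :: ('v,'e,'k) fpoly)
      = psum X (\<lambda>e. psub (mon [GE e, GS e]) (mon [GV v, GE e, GS e]))"
      unfolding eestar_def pmul_mon_left_psum psum_psub by (simp add: pmul_mon_mon)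
    also have "\<dots> = psum X (\<lambda>e. pmul (mon []) (pmul (psmult (-1) (?R' e)) (mon [GS e])))"
    proof (rule psum_cong)
      fix e assume e: "e \<in> X"
      show "psub (mon [GE e, GS e]) (mon [GV v, GE e, GS e]) = pmul (mon []) (pmul (psmult (-1) (?R' e)) (mon [GS e]))"
        unfolding pmul_mon_Nil_left pmul_mon_right_psmult pmul_mon_right_psub pmul_mon_mon
        using sX[OF e] by (simp add: psub_def psmult_def fun_eq_iff)
    qed
    finally show ?thesis .
  qed
  have "psum X (\<lambda>e. pmul (mon []) (pmul (psmult (-1) (?R' e)) (mon [GS e]))) \<in> ?I"
    unfolding CL_ideal_def
  proof (rule psum_ideal[OF fX])
    fix e assume e: "e \<in> X"
    have "?R' e \<in> CL_relations V Ed r s C S" using e XE unfolding CL_relations_def by blast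
    moreover have "list_all (valid_gen V Ed) [GS e]" using e XE by (auto simp: valid_gen_def)
    ultimately show "pmul (mon []) (pmul (psmult (-1) (?R' e)) (mon [GS e])) \<in> gen_ideal V Ed (CL_relations V Ed r s C S)"
      by (intro gen_ideal.mult gen_ideal.smult gen_ideal.base) auto
  qed
  then show "CL_eq V Ed r s C S (eestar X) (pmul (mon [GV v]) (eestar X) :: ('v,'e,'k) fpoly)"
    unfolding CL_eq_def eq2 .
qed


theorem corollary3p5:
  fixes V :: "'v set" and Ed :: "'e set" and r s :: "'e \<Rightarrow> 'v" and C S :: "'e set set"
  assumes sg: "separated_graph V Ed r s C"
    and cV: "countable V" and cE: "countable Ed"
    and S: "S \<subseteq> Cfin C"
  shows
    "(\<forall>e\<in>Ed. \<not> CL_eq V Ed r s C S (mon [GE e]) (pzero :: ('v,'e,'k::field) fpoly))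
   \<and> (\<forall>v\<in>V. \<not> CL_eq V Ed r s C S (mon [GV v]) (pzero :: ('v,'e,'k) fpoly))
   \<and> (\<forall>v\<in>V. \<forall>X\<in>Cv s C v. \<forall>Y\<in>Cv s C v. X \<noteq> Y \<longrightarrow> (\<forall>e\<in>X. \<forall>f\<in>Y.
        \<not> CL_eq V Ed r s C S (mon [GS e, GE f]) (pzero :: ('v,'e,'k) fpoly)))
   \<and> (\<forall>v\<in>V. \<forall>X\<in>Cv s C v - S. finite X \<longrightarrow>
        CL_eq V Ed r s C S (pmul (eestar X) (mon [GV v])) (eestar X :: ('v,'e,'k) fpoly)
      \<and> CL_eq V Ed r s C S (eestar X) (pmul (mon [GV v]) (eestar X) :: ('v,'e,'k) fpoly)
      \<and> \<not> CL_eq V Ed r s C S (eestar X) (mon [GV v] :: ('v,'e,'k) fpoly))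
   \<and> (\<forall>X\<in>C - S. \<forall>Y\<in>C - S. finite X \<longrightarrow> finite Y \<longrightarrow> X \<noteq> Y \<longrightarrow>
        \<not> CL_eq V Ed r s C S (eestar X) (eestar Y :: ('v,'e,'k) fpoly))"
proof (intro conjI ballI impI allI)
  fix e assume "e \<in> Ed"
  then show "\<not> CL_eq V Ed r s C S (mon [GE e]) (pzero :: ('v,'e,'k::field) fpoly)"
    by (rule claim1[OF sg cE S])
next
  fix v assume "v \<in> V"
  show "\<not> CL_eq V Ed r s C S (mon [GV v]) (pzero :: ('v,'e,'k) fpoly)"
    by (rule claim2[OF sg cE S])
next
  fix v X Y e f assume "v \<in> V" "X \<in> Cv s C v" "Y \<in> Cv s C v" "X \<noteq> Y" "e \<in> X" "f \<in> Y"
  then show "\<not> CL_eq V Ed r s C S (mon [GS e, GE f]) (pzero :: ('v,'e,'k) fpoly)"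
    using claim3[OF sg cE S] by blast
next
  fix v X assume "v \<in> V" "X \<in> Cv s C v - S" "finite X"
  then show "CL_eq V Ed r s C S (pmul (eestar X) (mon [GV v])) (eestar X :: ('v,'e,'k) fpoly)"
    using claim4_pos(1)[OF sg] by blast
next
  fix v X assume "v \<in> V" "X \<in> Cv s C v - S" "finite X"
  then show "CL_eq V Ed r s C S (eestar X) (pmul (mon [GV v]) (eestar X) :: ('v,'e,'k) fpoly)"
    using claim4_pos(2)[OF sg] by blast
next
  fix v X assume "v \<in> V" "X \<in> Cv s C v - S" "finite X"
  then show "\<not> CL_eq V Ed r s C S (eestar X) (mon [GV v] :: ('v,'e,'k) fpoly)"
    using claim4_neg[OF sg cE S] by blast
next
  fix X Y assume "X \<in> C - S" "Y \<in> C - S" "finite X" "finite Y" "X \<noteq> Y"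
  then show "\<not> CL_eq V Ed r s C S (eestar X) (eestar Y :: ('v,'e,'k) fpoly)"
    using claim5[OF sg cE S] by blast
qed

end
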